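(* Let $A:\mathbb{R}^n\rightrightarrows\mathbb{R}^n$ be a maximally monotone symmetric linear relation, $a,b\in\mathbb{R}^n$, $c\in\mathbb{R}$, $r>0$, and define the generalized linear-quadratic function $$f(x)=\frac r2\langle x-a,A(x-a)\rangle+\langle b,x\rangle+c$$ (with $f(x)=\infty$ when $x-a\notin\operatorname{dom}A$). Then for every $x\in\mathbb{R}^n$, $$e_rf(x)=r\,q_{(\operatorname{Id}+A^{-1})^{-1}}\Big(x-a-\frac br\Big)+\langle b,x\rangle-\frac1r q(b)+c.$$
   Context: A linear relation is an operator $A:\mathbb{R}^n\rightrightarrows\mathbb{R}^n$ whose graph $\{(x,x^* ):x^*\in Ax\}$ is a linear subspace of $\mathbb{R}^n\times\mathbb{R}^n$. $A$ is monotone if $\langle x^*-y^*,x-y\rangle\ge0$ for all $(x,x^* ),(y,y^* )$ in its graph, maximally monotone if no monotone operator has a strictly larger graph, and symmetric if $\langle x,y^*\rangle=\langle y,x^*\rangle$ for all $(x,x^* ),(y,y^* )\in\operatorname{gra}A$. $A^{-1}$ is the set-valued inverse. For a monotone linear relation $B$, $q_B(x)=\frac12\langle x,Bx\rangle$ if $x\in\operatorname{dom}B$ (single-valued) and $\infty$ otherwise. $q=\frac12\|\cdot\|^2$. The Moreau envelope is $e_rf(x)=\inf_y\{f(y)+\frac r2\|y-x\|^2\}$. *)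

theory Defs
  imports "HOL-Analysis.Analysis"
begin

text \<open>Set-valued operators on R^n are represented by their graphs,
  i.e. sets of pairs (x, x*) with x* in A x.\<close>

type_synonym 'n rel_op = "((real^'n) \<times> (real^'n)) set"

definition linear_relation :: "('n::finite) rel_op \<Rightarrow> bool" where
  "linear_relation A \<longleftrightarrow> subspace A"

definition monotone_op :: "('n::finite) rel_op \<Rightarrow> bool" where
  "monotone_op A \<longleftrightarrow> (\<forall>(x, x') \<in> A. \<forall>(y, y') \<in> A. inner (x' - y') (x - y) \<ge> 0)"

definition maximally_monotone :: "('n::finite) rel_op \<Rightarrow> bool" where
  "maximally_monotone A \<longleftrightarrow> monotone_op A \<and>
     (\<forall>B. monotone_op B \<and> A \<subseteq> B \<longrightarrow> B = A)"

definition symmetric_op :: "('n::finite) rel_op \<Rightarrow> bool" where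
  "symmetric_op A \<longleftrightarrow> (\<forall>(x, x') \<in> A. \<forall>(y, y') \<in> A. inner x y' = inner y x')"

definition op_inv :: "('n::finite) rel_op \<Rightarrow> 'n rel_op" where
  "op_inv A = {(x', x) | x x'. (x, x') \<in> A}"

definition id_plus :: "('n::finite) rel_op \<Rightarrow> 'n rel_op" where
  "id_plus B = {(x, x + y) | x y. (x, y) \<in> B}"

text \<open>A chosen element of A x (for x in dom A); for a monotone linear
  relation the value of inner x (A x) does not depend on the choice.\<close>
definition op_pick :: "('n::finite) rel_op \<Rightarrow> real^'n \<Rightarrow> real^'n" where
  "op_pick A x = (SOME y. (x, y) \<in> A)"

definition q_op :: "('n::finite) rel_op \<Rightarrow> real^'n \<Rightarrow> ereal" where
  "q_op B x = (if x \<in> Domain B then ereal (1/2 * inner x (op_pick B x)) else \<infinity>)"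

definition qn :: "(real^('n::finite)) \<Rightarrow> real" where
  "qn x = 1/2 * (norm x)^2"

definition moreau_env :: "real \<Rightarrow> (real^('n::finite) \<Rightarrow> ereal) \<Rightarrow> real^'n \<Rightarrow> ereal" where
  "moreau_env r f x = (INF y. f y + ereal (r/2 * (norm (y - x))^2))"

definition glq :: "('n::finite) rel_op \<Rightarrow> real \<Rightarrow> real^'n \<Rightarrow> real^'n \<Rightarrow> real \<Rightarrow> real^'n \<Rightarrow> ereal" where
  "glq A r a b c x = (if x - a \<in> Domain A
     then ereal (r/2 * inner (x - a) (op_pick A (x - a)) + inner b x + c) else \<infinity>)"

end

theory Submission
  imports Defs
begin

lemma monoD:
  assumes "monotone_op A" "(x, x') \<in> A" "(y, y') \<in> A"
  shows "(x' - y') \<bullet> (x - y) \<ge> 0"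
  using assms unfolding monotone_op_def by fast

lemma monoI:
  assumes "\<And>x x' y y'. (x, x') \<in> S \<Longrightarrow> (y, y') \<in> S \<Longrightarrow> (x' - y') \<bullet> (x - y) \<ge> 0"
  shows "monotone_op S"
  using assms unfolding monotone_op_def by auto

lemma symD:
  assumes "symmetric_op A" "(x, x') \<in> A" "(y, y') \<in> A"
  shows "x \<bullet> y' = y \<bullet> x'"
  using assms unfolding symmetric_op_def by fast

lemma alg:
  fixes p p' d d' a b :: "real^'n::finite" and r c :: real
  assumes "r > 0"
  shows "r/2 * ((p+d) \<bullet> (p'+d')) + b \<bullet> (a + p + d) + c
      + r/2 * (norm ((a+p+d) - (a + (p+p') + (1/r) *\<^sub>R b)))^2
   = r/2 * ((p+p') \<bullet> p') + (b \<bullet> (a + (p+p') + (1/r) *\<^sub>R b) - (1/r) * (1/2 * (norm b)^2) + c)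
      + r/2 * (d \<bullet> d' + d \<bullet> d) + r/2 * (p \<bullet> d' - d \<bullet> p')"
  using assms
  by (simp add: power2_norm_eq_inner inner_simps inner_commute field_simps)

lemma surj_lemma:
  fixes A :: "('n::finite) rel_op"
  assumes lin: "linear_relation A" and mm: "maximally_monotone A"
  shows "\<exists>p p'. (p, p') \<in> A \<and> p + p' = w"
proof (rule ccontr)
  assume nw: "\<not> (\<exists>p p'. (p, p') \<in> A \<and> p + p' = w)"
  let ?R = "(\<lambda>z. fst z + snd z) ` A"
  have sub: "subspace A" using lin linear_relation_def by auto
  have lf: "linear (\<lambda>z::(real^'n)\<times>(real^'n). fst z + snd z)"
    by (simp add: linear_iff algebra_simps scaleR_right_distrib)
  have sR: "subspace ?R" by (rule linear_subspace_image[OF lf sub])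
  have "w \<notin> ?R" using nw by force
  moreover have "span ?R = ?R" using sR span_eq_iff by blast
  ultimately have nU: "span ?R \<noteq> UNIV" by (metis UNIV_I)
  obtain v where v0: "v \<noteq> 0" and vR: "span ?R \<subseteq> {x. v \<bullet> x = 0}"
    using span_not_univ_subset_hyperplane[OF nU] by blast
  have orth: "v \<bullet> (x + x') = 0" if "(x, x') \<in> A" for x x'
  proof -
    have "x + x' \<in> ?R" using rev_image_eqI[OF that, of "x + x'" "\<lambda>z. fst z + snd z"] by simp
    then have "x + x' \<in> span ?R" by (rule span_base)
    then show ?thesis using vR by auto
  qed
  have mon: "monotone_op A" using mm maximally_monotone_def by auto
  have A0: "(0, 0) \<in> A" proof -
    have "0 \<in> A" by (rule subspace_0[OF sub])
    then show ?thesis by (simp add: zero_prod_def)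
  qed
  have pos: "x' \<bullet> x \<ge> 0" if "(x, x') \<in> A" for x x'
    using monoD[OF mon that A0] by simp
  have key: "(v - x') \<bullet> (v - x) \<ge> 0" if "(x, x') \<in> A" for x x'
  proof -
    have "(v - x') \<bullet> (v - x) = v \<bullet> v - v \<bullet> (x + x') + x' \<bullet> x"
      by (simp add: inner_simps inner_commute)
    then show ?thesis using orth[OF that] pos[OF that] by simp
  qed
  have "monotone_op (insert (v, v) A)"
  proof (rule monoI)
    fix x x' y y' assume h1: "(x, x') \<in> insert (v, v) A" and h2: "(y, y') \<in> insert (v, v) A"
    show "0 \<le> (x' - y') \<bullet> (x - y)"
    proof (cases "(x, x') \<in> A")
      case True
      show ?thesis
      proof (cases "(y, y') \<in> A")
        case True
        then show ?thesis using monoD[OF mon \<open>(x, x') \<in> A\<close> True] by simp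
      next
        case False
        then have "y = v" "y' = v" using h2 by auto
        have "(x' - y') \<bullet> (x - y) = (v - x') \<bullet> (v - x)"
          using \<open>y = v\<close> \<open>y' = v\<close> by (simp add: inner_simps inner_commute)
        then show ?thesis using key[OF True] by simp
      qed
    next
      case False
      then have xv: "x = v" "x' = v" using h1 by auto
      show ?thesis
      proof (cases "(y, y') \<in> A")
        case True
        then show ?thesis using key[OF True] xv by (simp add: inner_simps inner_commute)
      next
        case False
        then show ?thesis using h2 xv by auto
      qed
    qed
  qed
  then have "insert (v, v) A = A" using mm unfolding maximally_monotone_def by blast
  then have "(v, v) \<in> A" by blast
  then have "v \<bullet> (v + v) = 0" using orth by blast
  then have "v \<bullet> v = 0" by (simp only: inner_add_right)
  then have "v = 0" by simp
  then show False using v0 by simp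
qed

lemma B_mem:
  "(w, q) \<in> op_inv (id_plus (op_inv A)) \<longleftrightarrow> (\<exists>p. (p, q) \<in> A \<and> q + p = w)"
  unfolding op_inv_def id_plus_def by auto

theorem theorem4p46:
  fixes A :: "('n::finite) rel_op" and a b x :: "real^'n" and c r :: real
  assumes "linear_relation A" and "maximally_monotone A" and "symmetric_op A"
    and "r > 0"
  shows "moreau_env r (glq A r a b c) x =
    ereal r * q_op (op_inv (id_plus (op_inv A))) (x - a - (1/r) *\<^sub>R b)
      + ereal (inner b x - (1/r) * qn b + c)"
proof -
  define w where "w = x - a - (1/r) *\<^sub>R b"
  define B where "B = op_inv (id_plus (op_inv A))"
  have sub: "subspace A" using assms(1) linear_relation_def by auto
  have mon: "monotone_op A" using assms(2) maximally_monotone_def by auto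
  have A0: "(0, 0) \<in> A" proof -
    have "0 \<in> A" by (rule subspace_0[OF sub])
    then show ?thesis by (simp add: zero_prod_def)
  qed
  obtain p p' where pA: "(p, p') \<in> A" and pw: "p + p' = w"
    using surj_lemma[OF assms(1,2)] by blast
  have xeq: "x = a + (p + p') + (1/r) *\<^sub>R b" using pw w_def by simp
  define V where "V = r/2 * (w \<bullet> p') + (b \<bullet> x - (1/r) * qn b + c)"
  have Valt: "V = r/2 * ((p+p') \<bullet> p') + (b \<bullet> (a + (p+p') + (1/r) *\<^sub>R b) - (1/r) * (1/2 * (norm b)^2) + c)"
    unfolding V_def qn_def using pw xeq by simp
  have lower: "ereal V \<le> glq A r a b c y + ereal (r/2 * (norm (y - x))^2)" for y
  proof (cases "y - a \<in> Domain A")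
    case False
    then show ?thesis by (simp add: glq_def)
  next
    case True
    define u where "u = y - a"
    define u' where "u' = op_pick A u"
    have uA: "(u, u') \<in> A" using True unfolding u_def u'_def op_pick_def
      by (metis DomainE someI)
    define d where "d = u - p"
    define d' where "d' = u' - p'"
    have dA: "(d, d') \<in> A"
      using subspace_diff[OF sub uA pA] unfolding d_def d'_def by simp
    have dd: "d \<bullet> d' \<ge> 0" using monoD[OF mon dA A0] by (simp add: inner_commute)
    have ds: "p \<bullet> d' = d \<bullet> p'" using symD[OF assms(3) pA dA] .
    have y: "y = a + p + d" unfolding d_def u_def by simp
    have yu: "a + u = y" unfolding u_def by simp
    have "glq A r a b c y + ereal (r/2 * (norm (y - x))^2)
      = ereal (r/2 * ((p+d) \<bullet> (p'+d')) + b \<bullet> (a + p + d) + c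
      + r/2 * (norm ((a+p+d) - (a + (p+p') + (1/r) *\<^sub>R b)))^2)"
      using True unfolding glq_def u'_def[symmetric] u_def[symmetric]
      by (simp add: yu d_def d'_def y[symmetric] xeq[symmetric])
    also have "\<dots> = ereal (V + r/2 * (d \<bullet> d' + d \<bullet> d) + r/2 * (p \<bullet> d' - d \<bullet> p'))"
      using alg[OF assms(4), of p d p' d' b a c] Valt by simp
    finally show ?thesis using dd ds assms(4) by simp
  qed
  have at: "glq A r a b c (a + p) + ereal (r/2 * (norm ((a + p) - x))^2) = ereal V"
  proof -
    have pD: "(a + p) - a \<in> Domain A" using pA by auto
    have pA2: "(p, op_pick A p) \<in> A" using pA unfolding op_pick_def by (metis someI)
    have "p \<bullet> op_pick A p = p \<bullet> p'" using symD[OF assms(3) pA pA2] by simp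
    then have "glq A r a b c (a + p) + ereal (r/2 * (norm ((a + p) - x))^2)
      = ereal (r/2 * ((p+0) \<bullet> (p'+0)) + b \<bullet> (a + p + 0) + c
      + r/2 * (norm ((a+p+0) - (a + (p+p') + (1/r) *\<^sub>R b)))^2)"
      using pD unfolding glq_def by (simp add: xeq[symmetric])
    also have "\<dots> = ereal V"
      using alg[OF assms(4), of p 0 p' 0 b a c] Valt by simp
    finally show ?thesis .
  qed
  have env: "moreau_env r (glq A r a b c) x = ereal V"
    unfolding moreau_env_def
  proof (rule antisym)
    show "(INF y. glq A r a b c y + ereal (r / 2 * (norm (y - x))\<^sup>2)) \<le> ereal V"
      using INF_lower[OF UNIV_I, of "\<lambda>y. glq A r a b c y + ereal (r / 2 * (norm (y - x))\<^sup>2)" "a + p"] at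
      by simp
    show "ereal V \<le> (INF y. glq A r a b c y + ereal (r / 2 * (norm (y - x))\<^sup>2))"
      using lower by (rule INF_greatest)
  qed
  have wB: "(w, p') \<in> B" unfolding B_def B_mem using pA pw by (metis add.commute)
  then have wD: "w \<in> Domain B" by auto
  have qB: "(w, op_pick B w) \<in> B" using wB unfolding op_pick_def by (metis someI)
  then obtain p2 where p2A: "(p2, op_pick B w) \<in> A" and p2w: "op_pick B w + p2 = w"
    unfolding B_def B_mem by blast
  have "(p' - op_pick B w) \<bullet> (p - p2) \<ge> 0" using monoD[OF mon pA p2A] .
  moreover have "p - p2 = - (p' - op_pick B w)" using pw p2w by (simp add: algebra_simps)
  ultimately have "0 \<le> (p' - op_pick B w) \<bullet> (- (p' - op_pick B w))" by simp
  then have "(p' - op_pick B w) \<bullet> (p' - op_pick B w) \<le> 0" by (simp only: inner_minus_right)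
  then have "(p' - op_pick B w) \<bullet> (p' - op_pick B w) = 0"
    using inner_ge_zero[of "p' - op_pick B w"] by linarith
  then have "p' - op_pick B w = 0" by (simp only: inner_eq_zero_iff)
  then have pick: "op_pick B w = p'" by simp
  have "q_op B w = ereal (1/2 * (w \<bullet> p'))" unfolding q_op_def using wD pick by simp
  then have "ereal r * q_op B w + ereal (inner b x - (1/r) * qn b + c) = ereal V"
    unfolding V_def by simp
  then show ?thesis using env unfolding B_def w_def by simp
qed

end
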